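(* Let $\omega$ be a primitive third root of unity, $S=\mathbb{C}\langle x,y,z\rangle/(x^2,y^2,z^2)$ graded by $\deg x=\deg y=\deg z=1$. For $p=([A_1:B_1],[A_2:B_2])\in\mathbb{P}^1\times\mathbb{P}^1$ let $I_p$ be the two-sided ideal of $S$ generated by $$A_1(zxy+\omega xyz+\omega^2 yzx)+B_1(yxz+\omega zyx+\omega^2 xzy),\quad A_2(zxy+\omega^2 xyz+\omega yzx)+B_2(yxz+\omega^2 zyx+\omega xzy).$$ Then $\dim (S/I_p)_k=\dim\mathbb{C}[x,y,z]_k=\binom{k+2}{2}$ for all $k\le 4$ if and only if $A_1B_2-A_2B_1=0$. *)

theory Defs
  imports Complex_Main "HOL-Library.Function_Algebras"
begin

text \<open>Noncommutative polynomials in the letters x = 0, y = 1, z = 2 are represented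
  as coefficient functions on words (nat lists).\<close>

type_synonym ncpoly = "nat list \<Rightarrow> complex"

definition ncsc :: "complex \<Rightarrow> ncpoly \<Rightarrow> ncpoly" where
  "ncsc c f = (\<lambda>w. c * f w)"

definition ncmul :: "ncpoly \<Rightarrow> ncpoly \<Rightarrow> ncpoly" where
  "ncmul f g = (\<lambda>w. \<Sum>i\<le>length w. f (take i w) * g (drop i w))"

definition mon :: "nat list \<Rightarrow> ncpoly" where
  "mon u = (\<lambda>w. if w = u then 1 else 0)"

definition FA :: "ncpoly set" where
  "FA = {f. finite {w. f w \<noteq> 0} \<and> (\<forall>w. f w \<noteq> 0 \<longrightarrow> set w \<subseteq> {0,1,2})}"

definition hom :: "nat \<Rightarrow> ncpoly set" where
  "hom k = {f \<in> FA. \<forall>w. f w \<noteq> 0 \<longrightarrow> length w = k}"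

definition ncspan :: "ncpoly set \<Rightarrow> ncpoly set" where
  "ncspan = Modules.module.span ncsc"

definition ncdim :: "ncpoly set \<Rightarrow> nat" where
  "ncdim = Vector_Spaces.vector_space.dim ncsc"

definition ideal_gen :: "ncpoly set \<Rightarrow> ncpoly set" where
  "ideal_gen G = ncspan {ncmul (ncmul a g) b | a g b. a \<in> FA \<and> g \<in> G \<and> b \<in> FA}"

definition quot_dim :: "ncpoly set \<Rightarrow> nat \<Rightarrow> nat" where
  "quot_dim G k = ncdim (hom k) - ncdim (ideal_gen G \<inter> hom k)"

text \<open>The generators of I_p (together with x^2, y^2, z^2, which define S).\<close>
definition gen1 :: "complex \<Rightarrow> complex \<Rightarrow> complex \<Rightarrow> ncpoly" where
  "gen1 \<omega> A B =
     ncsc A (mon [2,0,1] + ncsc \<omega> (mon [0,1,2]) + ncsc (\<omega>^2) (mon [1,2,0]))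
   + ncsc B (mon [1,0,2] + ncsc \<omega> (mon [2,1,0]) + ncsc (\<omega>^2) (mon [0,2,1]))"

definition gen2 :: "complex \<Rightarrow> complex \<Rightarrow> complex \<Rightarrow> ncpoly" where
  "gen2 \<omega> A B =
     ncsc A (mon [2,0,1] + ncsc (\<omega>^2) (mon [0,1,2]) + ncsc \<omega> (mon [1,2,0]))
   + ncsc B (mon [1,0,2] + ncsc (\<omega>^2) (mon [2,1,0]) + ncsc \<omega> (mon [0,2,1]))"

definition Sp_rels :: "complex \<Rightarrow> complex \<Rightarrow> complex \<Rightarrow> complex \<Rightarrow> complex \<Rightarrow> ncpoly set" where
  "Sp_rels \<omega> A1 B1 A2 B2 =
     {mon [0,0], mon [1,1], mon [2,2], gen1 \<omega> A1 B1, gen2 \<omega> A2 B2}"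

end

theory Submission
  imports Defs
begin


interpretation V: vector_space ncsc
  by unfold_locales (auto simp: ncsc_def fun_eq_iff algebra_simps)

lemma ncspan_eq: "ncspan = V.span" by (simp add: ncspan_def)
lemma ncdim_eq: "ncdim = V.dim" by (simp add: ncdim_def)

lemma sum_fun_apply: "(sum f A) x = (\<Sum>i\<in>A. f i x)"
  by (induction A rule: infinite_finite_induct) auto

lemma ncsc_apply[simp]: "ncsc c f w = c * f w" by (simp add: ncsc_def)

lemma mon_apply: "mon u w = (if w = u then 1 else 0)" by (simp add: mon_def)

lemma lmul_mon: "ncmul (mon u) f = (\<lambda>w. if take (length u) w = u then f (drop (length u) w) else 0)"
proof
  fix w
  have "ncmul (mon u) f w = (\<Sum>i\<le>length w. (if i = length u then (if take (length u) w = u then f (drop (length u) w) else 0) else 0))"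
    unfolding ncmul_def
    by (rule sum.cong) (auto simp: mon_def)
  also have "\<dots> = (if take (length u) w = u then f (drop (length u) w) else 0)"
    by (auto simp: min_def dest: arg_cong[of _ _ length])
  finally show "ncmul (mon u) f w = (if take (length u) w = u then f (drop (length u) w) else 0)" .
qed

lemma rmul_mon: "ncmul f (mon v) = (\<lambda>w. if length v \<le> length w \<and> drop (length w - length v) w = v then f (take (length w - length v) w) else 0)"
proof
  fix w
  have "ncmul f (mon v) w = (\<Sum>i\<le>length w. (if i = length w - length v then (if length v \<le> length w \<and> drop (length w - length v) w = v then f (take (length w - length v) w) else 0) else 0))"
    unfolding ncmul_def
  proof (rule sum.cong[OF refl])
    fix i assume "i \<in> {..length w}"
    hence i: "i \<le> length w" by simp
    have e: "drop i w = v \<longleftrightarrow> (i = length w - length v \<and> length v \<le> length w \<and> drop (length w - length v) w = v)"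
      using i by (metis diff_diff_cancel diff_le_self length_drop)
    show "f (take i w) * mon v (drop i w) = (if i = length w - length v then (if length v \<le> length w \<and> drop (length w - length v) w = v then f (take (length w - length v) w) else 0) else 0)"
      unfolding mon_apply e by auto
  qed
  also have "\<dots> = (if length v \<le> length w \<and> drop (length w - length v) w = v then f (take (length w - length v) w) else 0)"
    by (subst sum.delta) auto
  finally show "ncmul f (mon v) w = (if length v \<le> length w \<and> drop (length w - length v) w = v then f (take (length w - length v) w) else 0)" .
qed

definition sh :: "nat list \<Rightarrow> ncpoly \<Rightarrow> nat list \<Rightarrow> ncpoly" where
  "sh u g v = ncmul (ncmul (mon u) g) (mon v)"

lemma sh_app[simp]: "sh u g v (u @ w @ v) = g w"
  by (simp add: sh_def lmul_mon rmul_mon)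

lemma sh_zero: "(\<nexists>w'. w = u @ w' @ v) \<Longrightarrow> sh u g v w = 0"
proof (rule ccontr)
  assume nw: "\<nexists>w'. w = u @ w' @ v" and nz: "sh u g v w \<noteq> 0"
  let ?n = "length w - length v"
  from nz have c1: "length v \<le> length w \<and> drop ?n w = v" and c2: "take (length u) (take ?n w) = u"
    unfolding sh_def lmul_mon rmul_mon by (auto split: if_splits)
  have "w = take ?n w @ drop ?n w" by simp
  also have "take ?n w = u @ drop (length u) (take ?n w)" using c2
    by (metis append_take_drop_id)
  finally have "w = u @ drop (length u) (take ?n w) @ v" using c1 by simp
  with nw show False by blast
qed

lemma sh_nz: "sh u g v w \<noteq> 0 \<Longrightarrow> \<exists>w'. w = u @ w' @ v \<and> g w' \<noteq> 0"
  by (metis sh_app sh_zero)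

lemma mon_mul: "ncmul (mon u) (mon v) = mon (u @ v)"
  unfolding lmul_mon apply (auto simp: mon_def fun_eq_iff dest: arg_cong[of _ _ length])
  by (metis append_take_drop_id)

lemma sh_mon: "sh u (mon x) v = mon (u @ x @ v)"
  by (simp add: sh_def mon_mul)


definition words :: "nat \<Rightarrow> nat list set" where
  "words k = {w. set w \<subseteq> {0,1,2} \<and> length w = k}"

lemma finite_words[simp]: "finite (words k)"
  unfolding words_def by (rule finite_lists_length_eq) simp

lemma card_words: "card (words k) = 3 ^ k"
  unfolding words_def by (simp add: card_lists_length_eq numeral_3_eq_3)

lemma expand_supp:
  assumes "finite A" "\<And>w. f w \<noteq> 0 \<Longrightarrow> w \<in> A"
  shows "f = (\<Sum>u\<in>A. ncsc (f u) (mon u))"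
proof
  fix w
  have "(\<Sum>u\<in>A. ncsc (f u) (mon u)) w = (\<Sum>u\<in>A. (if u = w then f w else 0))"
    unfolding sum_fun_apply by (rule sum.cong) (auto simp: mon_def)
  also have "\<dots> = f w" using assms by (subst sum.delta) auto
  finally show "f w = (\<Sum>u\<in>A. ncsc (f u) (mon u)) w" by simp
qed

lemma supp_span:
  assumes "finite A" "\<And>w. f w \<noteq> 0 \<Longrightarrow> w \<in> A"
  shows "f \<in> V.span (mon ` A)"
proof -
  have e: "f = (\<Sum>u\<in>A. ncsc (f u) (mon u))" by (rule expand_supp[OF assms])
  have "(\<Sum>u\<in>A. ncsc (f u) (mon u)) \<in> V.span (mon ` A)"
    by (intro V.span_sum V.span_scale V.span_base) auto
  with e show ?thesis by simp
qed

lemma indep_family: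
  assumes fin: "finite I" and sc: "\<And>c. (\<Sum>i\<in>I. ncsc (c i) (F i)) = 0 \<Longrightarrow> \<forall>i\<in>I. c i = 0"
  shows "V.independent (F ` I) \<and> card (F ` I) = card I"
proof -
  have inj: "inj_on F I"
  proof (rule inj_onI, rule ccontr)
    fix i j assume ij: "i \<in> I" "j \<in> I" "F i = F j" "i \<noteq> j"
    define c where "c = (\<lambda>k. if k = i then (1::complex) else if k = j then -1 else 0)"
    have "(\<Sum>k\<in>I. ncsc (c k) (F k)) = 0"
    proof
      fix w
      have "(\<Sum>k\<in>I. ncsc (c k) (F k)) w = (\<Sum>k\<in>I. (if k = i then F i w else 0) + (if k = j then - F j w else 0))"
        unfolding sum_fun_apply
      proof (rule sum.cong[OF refl])
        fix k assume "k \<in> I"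
        show "ncsc (c k) (F k) w = (if k = i then F i w else 0) + (if k = j then - F j w else 0)"
          using ij(4) unfolding c_def ncsc_apply by (cases "k = i"; cases "k = j") simp_all
      qed
      also have "\<dots> = (\<Sum>k\<in>I. (if k = i then F i w else 0)) + (\<Sum>k\<in>I. (if k = j then - F j w else 0))"
        by (rule sum.distrib)
      also have "\<dots> = F i w + - F j w" using fin ij(1,2) by (simp only: sum.delta if_True)
      also have "\<dots> = 0" using ij(3) by simp
      finally show "(\<Sum>k\<in>I. ncsc (c k) (F k)) w = 0 w" by simp
    qed
    hence "c i = 0" using sc ij(1) by blast
    thus False by (simp add: c_def)
  qed
  have "V.independent (F ` I)"
  proof (rule V.independent_if_scalars_zero)
    show "finite (F ` I)" using fin by simp
    fix f x assume s: "(\<Sum>x\<in>F ` I. ncsc (f x) x) = 0" and x: "x \<in> F ` I"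
    have "(\<Sum>x\<in>F ` I. ncsc (f x) x) = (\<Sum>i\<in>I. ncsc (f (F i)) (F i))"
      by (rule sum.reindex[OF inj, unfolded comp_def])
    with s have "(\<Sum>i\<in>I. ncsc (f (F i)) (F i)) = 0" by simp
    hence "\<forall>i\<in>I. f (F i) = 0" by (rule sc)
    with x show "f x = 0" by blast
  qed
  thus ?thesis using inj by (simp add: card_image)
qed

lemma mon_indep_sum:
  assumes "finite A" "(\<Sum>u\<in>A. ncsc (c u) (mon u)) = 0" "u \<in> A"
  shows "c u = 0"
proof -
  have "(\<Sum>u'\<in>A. ncsc (c u') (mon u')) u = (\<Sum>u'\<in>A. if u' = u then c u' else 0)"
    unfolding sum_fun_apply by (rule sum.cong) (auto simp: mon_def)
  also have "\<dots> = c u" using assms by (subst sum.delta) auto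
  finally have "(\<Sum>u'\<in>A. ncsc (c u') (mon u')) u = c u" .
  with assms show ?thesis by simp
qed

lemma mon_indep: assumes "finite A" shows "V.independent (mon ` A) \<and> card (mon ` A) = card A"
proof (rule indep_family[OF assms])
  fix c assume "(\<Sum>u\<in>A. ncsc (c u) (mon u)) = 0"
  then show "\<forall>u\<in>A. c u = 0" using mon_indep_sum[OF assms] by blast
qed

lemma hom_subspace: "V.subspace (hom k)"
proof -
  have a: "finite {w. f w + g w \<noteq> 0}" if "finite {w. f w \<noteq> 0}" "finite {w. g w \<noteq> 0}" for f g :: ncpoly
    by (rule finite_subset[OF _ finite_UnI[OF that]]) auto
  have b: "finite {w. c * f w \<noteq> 0}" if "finite {w. f w \<noteq> 0}" for f :: ncpoly and c
    by (rule finite_subset[OF _ that]) auto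
  show ?thesis unfolding V.subspace_def
  proof (intro conjI ballI allI)
    show "0 \<in> hom k" by (simp add: hom_def FA_def)
    fix f g assume f: "f \<in> hom k" and g: "g \<in> hom k"
    have s: "{w. (f + g) w \<noteq> 0} \<subseteq> {w. f w \<noteq> 0} \<union> {w. g w \<noteq> 0}" by auto
    have nz: "f w \<noteq> 0 \<or> g w \<noteq> 0" if "(f + g) w \<noteq> 0" for w using that by auto
    show "f + g \<in> hom k" using f g a[of f g] nz unfolding hom_def FA_def
      by (simp only: mem_Collect_eq plus_fun_apply) blast
  next
    fix c f assume f: "f \<in> hom k"
    show "ncsc c f \<in> hom k" using f b[of f c] unfolding hom_def FA_def by auto
  qed
qed

lemma mon_hom: "u \<in> words k \<Longrightarrow> mon u \<in> hom k"
  by (auto simp: hom_def FA_def words_def mon_def)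

lemma hom_span: "hom k = V.span (mon ` words k)"
proof
  show "hom k \<subseteq> V.span (mon ` words k)"
  proof
    fix f assume "f \<in> hom k"
    hence "\<And>w. f w \<noteq> 0 \<Longrightarrow> w \<in> words k" by (auto simp: hom_def FA_def words_def)
    thus "f \<in> V.span (mon ` words k)" by (intro supp_span) auto
  qed
  show "V.span (mon ` words k) \<subseteq> hom k"
    using mon_hom hom_subspace by (intro V.span_minimal) blast+
qed

lemma dim_hom: "ncdim (hom k) = 3 ^ k"
proof -
  have "V.dim (V.span (mon ` words k)) = card (mon ` words k)"
    by (rule V.dim_span_eq_card_independent) (simp add: mon_indep)
  thus ?thesis unfolding ncdim_eq hom_span using mon_indep[of "words k"] by (simp add: card_words)
qed


lemma ncmul_sum_left: "ncmul (\<Sum>i\<in>A. ncsc (c i) (F i)) h = (\<Sum>i\<in>A. ncsc (c i) (ncmul (F i) h))"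
proof
  fix w
  have "ncmul (\<Sum>i\<in>A. ncsc (c i) (F i)) h w = (\<Sum>j\<le>length w. \<Sum>i\<in>A. c i * (F i (take j w) * h (drop j w)))"
    by (simp add: ncmul_def sum_fun_apply sum_distrib_right mult.assoc)
  also have "\<dots> = (\<Sum>i\<in>A. \<Sum>j\<le>length w. c i * (F i (take j w) * h (drop j w)))"
    by (rule sum.swap)
  also have "\<dots> = (\<Sum>i\<in>A. ncsc (c i) (ncmul (F i) h)) w"
    by (simp add: ncmul_def sum_fun_apply sum_distrib_left)
  finally show "ncmul (\<Sum>i\<in>A. ncsc (c i) (F i)) h w = (\<Sum>i\<in>A. ncsc (c i) (ncmul (F i) h)) w" .
qed

lemma ncmul_sum_right: "ncmul h (\<Sum>i\<in>A. ncsc (c i) (F i)) = (\<Sum>i\<in>A. ncsc (c i) (ncmul h (F i)))"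
proof
  fix w
  have "ncmul h (\<Sum>i\<in>A. ncsc (c i) (F i)) w = (\<Sum>j\<le>length w. \<Sum>i\<in>A. c i * (h (take j w) * F i (drop j w)))"
    by (simp add: ncmul_def sum_fun_apply sum_distrib_left mult.left_commute)
  also have "\<dots> = (\<Sum>i\<in>A. \<Sum>j\<le>length w. c i * (h (take j w) * F i (drop j w)))"
    by (rule sum.swap)
  also have "\<dots> = (\<Sum>i\<in>A. ncsc (c i) (ncmul h (F i))) w"
    by (simp add: ncmul_def sum_fun_apply sum_distrib_left)
  finally show "ncmul h (\<Sum>i\<in>A. ncsc (c i) (F i)) w = (\<Sum>i\<in>A. ncsc (c i) (ncmul h (F i))) w" .
qed

definition supp :: "ncpoly \<Rightarrow> nat list set" where "supp f = {w. f w \<noteq> 0}"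

lemma FA_expand: "a \<in> FA \<Longrightarrow> a = (\<Sum>u\<in>supp a. ncsc (a u) (mon u))"
  by (rule expand_supp) (auto simp: FA_def supp_def)

lemma prod_expand:
  assumes "a \<in> FA" "b \<in> FA"
  shows "ncmul (ncmul a g) b = (\<Sum>u\<in>supp a. ncsc (a u) (\<Sum>v\<in>supp b. ncsc (b v) (sh u g v)))"
proof -
  have "ncmul (ncmul a g) b = ncmul (ncmul (\<Sum>u\<in>supp a. ncsc (a u) (mon u)) g) b"
    using FA_expand[OF assms(1)] by metis
  also have "\<dots> = (\<Sum>u\<in>supp a. ncsc (a u) (ncmul (ncmul (mon u) g) b))"
    by (simp only: ncmul_sum_left)
  also have "\<dots> = (\<Sum>u\<in>supp a. ncsc (a u) (ncmul (ncmul (mon u) g) (\<Sum>v\<in>supp b. ncsc (b v) (mon v))))"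
    using FA_expand[OF assms(2)] by metis
  also have "\<dots> = (\<Sum>u\<in>supp a. ncsc (a u) (\<Sum>v\<in>supp b. ncsc (b v) (sh u g v)))"
    by (simp only: ncmul_sum_right sh_def)
  finally show ?thesis .
qed

definition proj :: "nat \<Rightarrow> ncpoly \<Rightarrow> ncpoly" where
  "proj k f = (\<lambda>w. if length w = k then f w else 0)"

lemma proj_sum: "proj k (\<Sum>i\<in>A. ncsc (c i) (F i)) = (\<Sum>i\<in>A. ncsc (c i) (proj k (F i)))"
  by (auto simp: proj_def fun_eq_iff sum_fun_apply)

lemma proj_hom: "f \<in> hom k \<Longrightarrow> proj k f = f"
  by (auto simp: proj_def fun_eq_iff hom_def)

lemma proj_hom_other: "f \<in> hom d \<Longrightarrow> d \<noteq> k \<Longrightarrow> proj k f = 0"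
  by (auto simp: proj_def fun_eq_iff hom_def)

lemma proj_subspace: "V.subspace {f. proj k f \<in> V.span E}"
  unfolding V.subspace_def
proof (intro conjI ballI allI)
  have "proj k 0 = 0" by (simp add: proj_def fun_eq_iff)
  thus "0 \<in> {f. proj k f \<in> V.span E}" by (simp add: V.span_zero)
  fix f g assume "f \<in> {f. proj k f \<in> V.span E}" "g \<in> {f. proj k f \<in> V.span E}"
  moreover have "proj k (f + g) = proj k f + proj k g" by (auto simp: proj_def fun_eq_iff)
  ultimately show "f + g \<in> {f. proj k f \<in> V.span E}" by (simp add: V.span_add)
next
  fix c f assume "f \<in> {f. proj k f \<in> V.span E}"
  moreover have "proj k (ncsc c f) = ncsc c (proj k f)" by (auto simp: proj_def fun_eq_iff)
  ultimately show "ncsc c f \<in> {f. proj k f \<in> V.span E}" by (simp add: V.span_scale)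
qed

lemma mon_FA: "set u \<subseteq> {0,1,2} \<Longrightarrow> mon u \<in> FA"
  by (auto simp: FA_def mon_def)

lemma sh_hom:
  assumes g: "g \<in> hom d" and u: "set u \<subseteq> {0,1,2}" and v: "set v \<subseteq> {0,1,2}"
  shows "sh u g v \<in> hom (length u + d + length v)"
proof -
  have fin: "finite {w. g w \<noteq> 0}" using g by (auto simp: hom_def FA_def)
  have "{w. sh u g v w \<noteq> 0} \<subseteq> (\<lambda>w'. u @ w' @ v) ` {w. g w \<noteq> 0}"
    using sh_nz by blast
  hence "finite {w. sh u g v w \<noteq> 0}" using fin by (meson finite_imageI finite_subset)
  moreover have "set w \<subseteq> {0,1,2} \<and> length w = length u + d + length v" if nz: "sh u g v w \<noteq> 0" for w
  proof -
    obtain w' where w': "w = u @ w' @ v" "g w' \<noteq> 0" using sh_nz[OF nz] by blast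
    hence "set w' \<subseteq> {0,1,2}" "length w' = d" using g by (auto simp: hom_def FA_def)
    thus ?thesis using w' u v by auto
  qed
  ultimately show ?thesis by (auto simp: hom_def FA_def)
qed

definition EE :: "ncpoly set \<Rightarrow> nat \<Rightarrow> ncpoly set" where
  "EE G k = {p \<in> hom k. \<exists>u g v. g \<in> G \<and> set u \<subseteq> {0,1,2} \<and> set v \<subseteq> {0,1,2} \<and> p = sh u g v}"

lemma ideal_subspace: "V.subspace (ideal_gen G)"
  by (simp add: ideal_gen_def ncspan_eq)

lemma ideal_hom:
  assumes G: "\<And>g. g \<in> G \<Longrightarrow> \<exists>d. g \<in> hom d"
  shows "ideal_gen G \<inter> hom k = V.span (EE G k)"
proof
  show "V.span (EE G k) \<subseteq> ideal_gen G \<inter> hom k"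
  proof (rule V.span_minimal)
    show "V.subspace (ideal_gen G \<inter> hom k)"
      by (rule V.subspace_inter[OF ideal_subspace hom_subspace])
    show "EE G k \<subseteq> ideal_gen G \<inter> hom k"
    proof
      fix p assume "p \<in> EE G k"
      then obtain u g v where p: "p \<in> hom k" "g \<in> G" "set u \<subseteq> {0,1,2}" "set v \<subseteq> {0,1,2}" "p = sh u g v"
        unfolding EE_def by blast
      have "p \<in> {ncmul (ncmul a g) b | a g b. a \<in> FA \<and> g \<in> G \<and> b \<in> FA}"
        using p mon_FA unfolding sh_def by blast
      hence "p \<in> ideal_gen G" unfolding ideal_gen_def ncspan_eq by (rule V.span_base)
      with p show "p \<in> ideal_gen G \<inter> hom k" by blast
    qed
  qed
  show "ideal_gen G \<inter> hom k \<subseteq> V.span (EE G k)"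
  proof
    fix f assume f: "f \<in> ideal_gen G \<inter> hom k"
    have sp: "f \<in> V.span {ncmul (ncmul a g) b | a g b. a \<in> FA \<and> g \<in> G \<and> b \<in> FA}"
      using f unfolding ideal_gen_def ncspan_eq by blast
    have "proj k f \<in> V.span (EE G k)"
    proof (rule V.span_induct[OF sp, where P="\<lambda>f. proj k f \<in> V.span (EE G k)"])
      show "V.subspace (Collect (\<lambda>f. proj k f \<in> V.span (EE G k)))" by (rule proj_subspace)
      fix p assume "p \<in> {ncmul (ncmul a g) b | a g b. a \<in> FA \<and> g \<in> G \<and> b \<in> FA}"
      then obtain a g b where p: "p = ncmul (ncmul a g) b" "a \<in> FA" "g \<in> G" "b \<in> FA" by blast
      obtain d where d: "g \<in> hom d" using G[OF p(3)] by blast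
      have one: "proj k (sh u g v) \<in> V.span (EE G k)" if "u \<in> supp a" "v \<in> supp b" for u v
      proof -
        have u: "set u \<subseteq> {0,1,2}" using that p(2) by (auto simp: FA_def supp_def)
        have v: "set v \<subseteq> {0,1,2}" using that p(4) by (auto simp: FA_def supp_def)
        have h: "sh u g v \<in> hom (length u + d + length v)" by (rule sh_hom[OF d u v])
        show ?thesis
        proof (cases "length u + d + length v = k")
          case True
          hence "sh u g v \<in> EE G k" using h u v p(3) unfolding EE_def by auto
          thus ?thesis using proj_hom h True by (metis V.span_base)
        next
          case False
          thus ?thesis using proj_hom_other[OF h False] by (simp add: V.span_zero)
        qed
      qed
      have "proj k p = (\<Sum>u\<in>supp a. ncsc (a u) (\<Sum>v\<in>supp b. ncsc (b v) (proj k (sh u g v))))"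
        unfolding p(1) prod_expand[OF p(2) p(4)] proj_sum by (simp only: proj_sum)
      also have "\<dots> \<in> V.span (EE G k)"
        using one by (intro V.span_sum V.span_scale) auto
      finally show "proj k p \<in> V.span (EE G k)" .
    qed
    thus "f \<in> V.span (EE G k)" using f proj_hom by auto
  qed
qed


fun hasrep :: "nat list \<Rightarrow> bool" where
  "hasrep (a # b # w) = (a = b \<or> hasrep (b # w))"
| "hasrep _ = False"

lemma hasrep_Cons: "hasrep w \<Longrightarrow> hasrep (c # w)"
  by (cases w rule: hasrep.cases) auto

lemma hasrep_mid: "hasrep (u @ [a, a] @ v)"
  by (induction u) (auto intro: hasrep_Cons)

lemma hasrep_split: "hasrep w \<Longrightarrow> \<exists>u a v. w = u @ [a, a] @ v"
proof (induction w rule: hasrep.induct)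
  case (1 a b w)
  show ?case
  proof (cases "a = b")
    case True thus ?thesis by (metis append_Nil append_Cons)
  next
    case False
    with 1 obtain u c v where "b # w = u @ [c, c] @ v" by auto
    hence "a # b # w = (a # u) @ [c, c] @ v" by simp
    thus ?thesis by blast
  qed
qed auto

definition NN :: "nat \<Rightarrow> nat list set" where
  "NN k = {w \<in> words k. hasrep w}"

lemma finite_NN[simp]: "finite (NN k)" by (simp add: NN_def)

fun wl :: "nat \<Rightarrow> nat list list" where
  "wl 0 = [[]]"
| "wl (Suc k) = concat (map (\<lambda>a. map (\<lambda>w. a # w) (wl k)) [0,1,2])"

lemma set_wl: "set (wl k) = words k"
proof (induction k)
  case 0 thus ?case by (auto simp: words_def)
next
  case (Suc k)
  show ?case
  proof
    show "set (wl (Suc k)) \<subseteq> words (Suc k)" using Suc by (auto simp: words_def)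
    show "words (Suc k) \<subseteq> set (wl (Suc k))"
    proof
      fix w assume "w \<in> words (Suc k)"
      then obtain a w' where "w = a # w'" "a \<in> {0,1,2}" "w' \<in> words k"
        by (cases w) (auto simp: words_def)
      thus "w \<in> set (wl (Suc k))" using Suc by auto
    qed
  qed
qed

lemma distinct_wl: "distinct (wl k)"
proof (induction k)
  case (Suc k)
  have "distinct (map (\<lambda>w. a # w) (wl k))" for a :: nat using Suc by (simp add: distinct_map)
  thus ?case by (auto simp: distinct_concat_iff)
qed simp

lemma NN_set: "NN k = set (filter hasrep (wl k))"
  by (auto simp: NN_def set_wl)

lemma card_NN: "card (NN k) = length (filter hasrep (wl k))"
  unfolding NN_set by (rule distinct_card) (simp add: distinct_wl)

lemma card_NN_vals: "card (NN 0) = 0" "card (NN 1) = 0" "card (NN 2) = 3" "card (NN 3) = 15" "card (NN 4) = 57"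
  by (simp_all add: card_NN numeral_eq_Suc)


lemma indep_block:
  assumes fin: "finite N"
    and key: "\<And>d. \<forall>x. x \<notin> N \<longrightarrow> (\<Sum>j<length L. d j * (L ! j) x) = 0 \<Longrightarrow> \<forall>j<length L. d j = 0"
  shows "V.dim (V.span (mon ` N \<union> set L)) = card N + length L"
proof -
  define I where "I = N <+> {..<length L}"
  define F where "F = case_sum mon (\<lambda>j. L ! j)"
  have finI: "finite I" using fin by (simp add: I_def)
  have FI: "F ` I = mon ` N \<union> set L"
  proof
    show "F ` I \<subseteq> mon ` N \<union> set L" unfolding I_def F_def by (auto simp: set_conv_nth)
    show "mon ` N \<union> set L \<subseteq> F ` I"
    proof
      fix x assume "x \<in> mon ` N \<union> set L"
      then consider w where "w \<in> N" "x = mon w" | j where "j < length L" "x = L ! j"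
        by (auto simp: set_conv_nth)
      thus "x \<in> F ` I"
      proof cases
        case 1 thus ?thesis unfolding I_def F_def by (intro rev_image_eqI[of "Inl w"]) auto
      next
        case 2 thus ?thesis unfolding I_def F_def by (intro rev_image_eqI[of "Inr j"]) auto
      qed
    qed
  qed
  have "V.independent (F ` I) \<and> card (F ` I) = card I"
  proof (rule indep_family[OF finI])
    fix c assume s: "(\<Sum>i\<in>I. ncsc (c i) (F i)) = 0"
    have split: "(\<Sum>i\<in>I. ncsc (c i) (F i)) = (\<Sum>w\<in>N. ncsc (c (Inl w)) (mon w)) + (\<Sum>j<length L. ncsc (c (Inr j)) (L ! j))"
      unfolding I_def F_def using fin by (simp add: sum.Plus)
    have m0: "(\<Sum>w\<in>N. ncsc (c (Inl w)) (mon w)) x = 0" if "x \<notin> N" for x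
      unfolding sum_fun_apply using that by (intro sum.neutral) (auto simp: mon_def)
    have "\<forall>x. x \<notin> N \<longrightarrow> (\<Sum>j<length L. c (Inr j) * (L ! j) x) = 0"
    proof (intro allI impI)
      fix x assume x: "x \<notin> N"
      have "(\<Sum>i\<in>I. ncsc (c i) (F i)) x = 0" using s by simp
      hence "(\<Sum>j<length L. ncsc (c (Inr j)) (L ! j)) x = 0" using m0[OF x] unfolding split by simp
      thus "(\<Sum>j<length L. c (Inr j) * (L ! j) x) = 0" by (simp add: sum_fun_apply)
    qed
    hence d0: "\<forall>j<length L. c (Inr j) = 0" by (rule key)
    have "(\<Sum>j<length L. ncsc (c (Inr j)) (L ! j)) = 0"
      using d0 by (intro sum.neutral) (auto simp: ncsc_def fun_eq_iff)
    hence "(\<Sum>w\<in>N. ncsc (c (Inl w)) (mon w)) = 0" using s unfolding split by simp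
    hence "\<forall>w\<in>N. c (Inl w) = 0" using mon_indep_sum[OF fin, of "\<lambda>w. c (Inl w)"] by blast
    thus "\<forall>i\<in>I. c i = 0" using d0 unfolding I_def by auto
  qed
  moreover have "card I = card N + length L" unfolding I_def using fin by (simp add: card_Plus)
  ultimately show ?thesis using FI V.dim_span_eq_card_independent by metis
qed

lemma hom_unique: "f \<in> hom k \<Longrightarrow> f \<in> hom d \<Longrightarrow> d \<noteq> k \<Longrightarrow> f = 0"
  by (auto simp: hom_def fun_eq_iff)

definition RR :: "ncpoly \<Rightarrow> ncpoly \<Rightarrow> nat \<Rightarrow> ncpoly set" where
  "RR g1 g2 k = {sh u g v | u g v. g \<in> {g1, g2} \<and> set u \<subseteq> {0,1,2} \<and> set v \<subseteq> {0,1,2} \<and> length u + length v + 3 = k}"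

lemma EE_char:
  assumes h1: "g1 \<in> hom 3" and h2: "g2 \<in> hom 3"
  shows "V.span (EE {mon [0,0], mon [1,1], mon [2,2], g1, g2} k) = V.span (mon ` NN k \<union> RR g1 g2 k)"
    (is "V.span (EE ?G k) = _")
proof (subst V.span_eq, intro conjI)
  show "EE ?G k \<subseteq> V.span (mon ` NN k \<union> RR g1 g2 k)"
  proof
    fix p assume "p \<in> EE ?G k"
    then obtain u g v where p: "p \<in> hom k" "g \<in> ?G" "set u \<subseteq> {0,1,2}" "set v \<subseteq> {0,1,2}" "p = sh u g v"
      unfolding EE_def by blast
    show "p \<in> V.span (mon ` NN k \<union> RR g1 g2 k)"
    proof (cases "g \<in> {g1, g2}")
      case True
      have gh: "g \<in> hom 3" using True h1 h2 by auto
      have hp: "p \<in> hom (length u + 3 + length v)" using sh_hom[OF gh p(3) p(4)] p(5) by simp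
      show ?thesis
      proof (cases "length u + 3 + length v = k")
        case True
        hence "length u + length v + 3 = k" by simp
        hence "p \<in> RR g1 g2 k" unfolding RR_def using p(3,4,5) \<open>g \<in> {g1,g2}\<close> by blast
        thus ?thesis by (auto intro: V.span_base)
      next
        case False
        hence "p = 0" using hom_unique[OF p(1) hp] by simp
        thus ?thesis by (simp add: V.span_zero)
      qed
    next
      case False
      then obtain a where a: "a \<in> {0,1,2}" "g = mon [a, a]" using p(2) by auto
      have pm: "p = mon (u @ [a,a] @ v)" using p(5) a(2) by (simp add: sh_mon)
      have "p (u @ [a,a] @ v) \<noteq> 0" using pm by (simp add: mon_def)
      hence "length (u @ [a,a] @ v) = k" using p(1) by (auto simp: hom_def)
      hence "u @ [a,a] @ v \<in> NN k" using p(3,4) a(1) hasrep_mid by (auto simp: NN_def words_def)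
      thus ?thesis using pm by (auto intro: V.span_base)
    qed
  qed
  show "mon ` NN k \<union> RR g1 g2 k \<subseteq> V.span (EE ?G k)"
  proof
    fix p assume "p \<in> mon ` NN k \<union> RR g1 g2 k"
    thus "p \<in> V.span (EE ?G k)"
    proof
      assume "p \<in> mon ` NN k"
      then obtain w where w: "w \<in> NN k" "p = mon w" by blast
      obtain u a v where uav: "w = u @ [a,a] @ v" using w(1) hasrep_split unfolding NN_def by blast
      have wk: "w \<in> words k" using w(1) by (simp add: NN_def)
      hence letters: "set u \<subseteq> {0,1,2}" "set v \<subseteq> {0,1,2}" "a \<in> {0,1,2}" using uav by (auto simp: words_def)
      have "p = sh u (mon [a,a]) v" using w(2) uav by (simp add: sh_mon)
      moreover have "p \<in> hom k" using w(2) wk mon_hom by simp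
      moreover have "mon [a,a] \<in> ?G" using letters(3) by auto
      ultimately have "p \<in> EE ?G k" using letters unfolding EE_def by blast
      thus ?thesis by (rule V.span_base)
    next
      assume "p \<in> RR g1 g2 k"
      then obtain u g v where p: "g \<in> {g1,g2}" "set u \<subseteq> {0,1,2}" "set v \<subseteq> {0,1,2}" "length u + length v + 3 = k" "p = sh u g v"
        unfolding RR_def by blast
      have gh: "g \<in> hom 3" using p(1) h1 h2 by auto
      have "p \<in> hom k" using sh_hom[OF gh p(2) p(3)] p(4,5) by (simp add: add.commute add.left_commute)
      hence "p \<in> EE ?G k" using p unfolding EE_def by blast
      thus ?thesis by (rule V.span_base)
    qed
  qed
qed



lemma sh_nil: "sh [] g [] = g"
  by (simp add: sh_def lmul_mon rmul_mon)

lemma sh_L: "sh [a] g [] = (\<lambda>w. case w of [] \<Rightarrow> 0 | b # w' \<Rightarrow> if b = a then g w' else 0)"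
  by (auto simp: sh_def lmul_mon rmul_mon fun_eq_iff split: list.split)

lemma sh_R: "sh [] g [a] = (\<lambda>w. if w \<noteq> [] \<and> last w = a then g (butlast w) else 0)"
proof
  fix w show "sh [] g [a] w = (if w \<noteq> [] \<and> last w = a then g (butlast w) else 0)"
    by (cases w rule: rev_cases) (auto simp: sh_def lmul_mon rmul_mon)
qed

lemma gen1_supp: "gen1 \<omega> A B w \<noteq> 0 \<Longrightarrow> w \<in> {[2,0,1],[0,1,2],[1,2,0],[1,0,2],[2,1,0],[0,2,1]}"
  by (rule ccontr) (simp add: gen1_def mon_def)

lemma gen2_supp: "gen2 \<omega> A B w \<noteq> 0 \<Longrightarrow> w \<in> {[2,0,1],[0,1,2],[1,2,0],[1,0,2],[2,1,0],[0,2,1]}"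
  by (rule ccontr) (simp add: gen2_def mon_def)

lemma supp_hom3:
  assumes "\<And>w. g w \<noteq> 0 \<Longrightarrow> w \<in> {[2,0,1],[0,1,2],[1,2,0],[1,0,2],[2,1,0],[0,2,1]}"
  shows "g \<in> hom 3"
proof -
  have "{w. g w \<noteq> 0} \<subseteq> {[2,0,1],[0,1,2],[1,2,0],[1,0,2],[2,1,0],[0,2,1]}" using assms by blast
  hence "finite {w. g w \<noteq> 0}" by (rule finite_subset) simp
  thus ?thesis using assms unfolding hom_def FA_def by fastforce
qed

lemma gen1_hom: "gen1 \<omega> A B \<in> hom 3" by (rule supp_hom3, rule gen1_supp)
lemma gen2_hom: "gen2 \<omega> A B \<in> hom 3" by (rule supp_hom3, rule gen2_supp)

lemma RR_small: "k < 3 \<Longrightarrow> RR g1 g2 k = {}"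
  by (auto simp: RR_def)

lemma RR_3: "RR g1 g2 3 = {g1, g2}"
  by (auto simp: RR_def sh_nil intro: exI[of _ "[]"])

definition L12 :: "ncpoly \<Rightarrow> ncpoly \<Rightarrow> ncpoly list" where
  "L12 g1 g2 = [sh [0] g1 [], sh [1] g1 [], sh [2] g1 [], sh [0] g2 [], sh [1] g2 [], sh [2] g2 [],
               sh [] g1 [0], sh [] g1 [1], sh [] g1 [2], sh [] g2 [0], sh [] g2 [1], sh [] g2 [2]]"

lemma RR_4: "RR g1 g2 4 = set (L12 g1 g2)"
proof
  show "RR g1 g2 4 \<subseteq> set (L12 g1 g2)"
  proof
    fix p assume "p \<in> RR g1 g2 4"
    then obtain u g v where p: "g \<in> {g1,g2}" "set u \<subseteq> {0,1,2}" "set v \<subseteq> {0,1,2}" "length u + length v = 1" "p = sh u g v"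
      unfolding RR_def by auto
    then consider a where "u = [a]" "v = []" "a \<in> {0,1,2}" | a where "u = []" "v = [a]" "a \<in> {0,1,2}"
      by (cases u; cases v) auto
    thus "p \<in> set (L12 g1 g2)" using p(1,5) by cases (auto simp: L12_def)
  qed
  have shin: "sh u g v \<in> RR g1 g2 4" if "g \<in> {g1,g2}" "set u \<subseteq> {0,1,2}" "set v \<subseteq> {0,1,2}" "length u + length v + 3 = 4" for u g v
    unfolding RR_def using that by blast
  show "set (L12 g1 g2) \<subseteq> RR g1 g2 4"
    unfolding L12_def by (auto intro!: shin)
qed


lemmas evsimps = L12_def sh_L sh_R gen1_def gen2_def mon_def NN_def words_def lessThan_nat_numeral

lemma lin2:
  fixes X Y :: complex
  assumes "\<alpha> * X + \<beta> * Y = 0" "\<gamma> * X + \<delta> * Y = 0" "\<alpha> * \<delta> - \<beta> * \<gamma> \<noteq> 0"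
  shows "X = 0 \<and> Y = 0"
proof -
  have "(\<alpha> * \<delta> - \<beta> * \<gamma>) * X = \<delta> * (\<alpha> * X + \<beta> * Y) - \<beta> * (\<gamma> * X + \<delta> * Y)" by (simp add: algebra_simps)
  hence x: "X = 0" using assms by simp
  have "(\<alpha> * \<delta> - \<beta> * \<gamma>) * Y = \<alpha> * (\<gamma> * X + \<delta> * Y) - \<gamma> * (\<alpha> * X + \<beta> * Y)" by (simp add: algebra_simps)
  hence "Y = 0" using assms by simp
  with x show ?thesis by simp
qed

lemma solveAB:
  fixes p q :: complex
  assumes "a \<noteq> 0" "b \<noteq> 0" "A1 * B2 - A2 * B1 \<noteq> 0"
    "a * A1 * p + b * A2 * q = 0" "a * B1 * p + b * B2 * q = 0"
  shows "p = 0 \<and> q = 0"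
proof (rule lin2[OF assms(4,5)])
  have "a * A1 * (b * B2) - b * A2 * (a * B1) = a * b * (A1 * B2 - A2 * B1)" by (simp add: algebra_simps)
  thus "a * A1 * (b * B2) - b * A2 * (a * B1) \<noteq> 0" using assms by simp
qed

lemma omega_facts:
  fixes \<omega> :: complex
  assumes "\<omega> ^ 3 = 1" "\<omega> \<noteq> 1"
  shows "\<omega> \<noteq> 0" "\<omega>\<^sup>2 \<noteq> 0" "\<omega>\<^sup>2 \<noteq> \<omega>" "\<omega>\<^sup>2 \<noteq> 1" "\<omega>\<^sup>2 + \<omega> + 1 = 0"
proof -
  show nz: "\<omega> \<noteq> 0" using assms by auto
  thus "\<omega>\<^sup>2 \<noteq> 0" by simp
  have f: "(\<omega> - 1) * (\<omega>\<^sup>2 + \<omega> + 1) = 0" using assms(1) by (simp add: algebra_simps power2_eq_square power3_eq_cube)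
  thus s: "\<omega>\<^sup>2 + \<omega> + 1 = 0" using assms(2) by simp
  show "\<omega>\<^sup>2 \<noteq> \<omega>"
  proof
    assume "\<omega>\<^sup>2 = \<omega>" hence "\<omega> * (\<omega> - 1) = 0" by (simp add: algebra_simps power2_eq_square)
    thus False using nz assms(2) by simp
  qed
  show "\<omega>\<^sup>2 \<noteq> 1"
  proof
    assume "\<omega>\<^sup>2 = 1" hence "\<omega> ^ 3 = \<omega>" by (simp add: power3_eq_cube power2_eq_square)
    thus False using assms by simp
  qed
qed

lemma key12:
  fixes \<omega> A1 B1 A2 B2 :: complex
  assumes w: "\<omega> ^ 3 = 1" "\<omega> \<noteq> 1" and det: "A1 * B2 - A2 * B1 \<noteq> 0"
  and H: "\<forall>x. x \<notin> NN 4 \<longrightarrow> (\<Sum>j<length (L12 (gen1 \<omega> A1 B1) (gen2 \<omega> A2 B2)). d j * (L12 (gen1 \<omega> A1 B1) (gen2 \<omega> A2 B2) ! j) x) = 0"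
  shows "\<forall>j<length (L12 (gen1 \<omega> A1 B1) (gen2 \<omega> A2 B2)). d j = 0"
proof -
  note of = omega_facts[OF w]
  have "(1) * A1 * d 0 + (1) * A2 * d 3 = 0" using H[rule_format, of "[0,2,0,1]"] by (simp add: evsimps eval_nat_numeral algebra_simps)
  moreover have "(1) * B1 * d 0 + (1) * B2 * d 3 = 0" using H[rule_format, of "[0,1,0,2]"] by (simp add: evsimps eval_nat_numeral algebra_simps)
  ultimately have d0: "d 0 = 0 \<and> d 3 = 0" using solveAB[OF _ _ det, of "1" "1" "d 0" "d 3"] of by simp
  have "(\<omega>) * A1 * d 1 + (\<omega>^2) * A2 * d 4 = 0" using H[rule_format, of "[1,0,1,2]"] by (simp add: evsimps eval_nat_numeral algebra_simps)
  moreover have "(\<omega>) * B1 * d 1 + (\<omega>^2) * B2 * d 4 = 0" using H[rule_format, of "[1,2,1,0]"] by (simp add: evsimps eval_nat_numeral algebra_simps)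
  ultimately have d1: "d 1 = 0 \<and> d 4 = 0" using solveAB[OF _ _ det, of "\<omega>" "\<omega>^2" "d 1" "d 4"] of by simp
  have "(\<omega>^2) * A1 * d 2 + (\<omega>) * A2 * d 5 = 0" using H[rule_format, of "[2,1,2,0]"] by (simp add: evsimps eval_nat_numeral algebra_simps)
  moreover have "(\<omega>^2) * B1 * d 2 + (\<omega>) * B2 * d 5 = 0" using H[rule_format, of "[2,0,2,1]"] by (simp add: evsimps eval_nat_numeral algebra_simps)
  ultimately have d2: "d 2 = 0 \<and> d 5 = 0" using solveAB[OF _ _ det, of "\<omega>^2" "\<omega>" "d 2" "d 5"] of by simp
  have "(1) * A1 * d 6 + (1) * A2 * d 9 = 0" using H[rule_format, of "[2,0,1,0]"] by (simp add: evsimps eval_nat_numeral algebra_simps)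
  moreover have "(1) * B1 * d 6 + (1) * B2 * d 9 = 0" using H[rule_format, of "[1,0,2,0]"] by (simp add: evsimps eval_nat_numeral algebra_simps)
  ultimately have d6: "d 6 = 0 \<and> d 9 = 0" using solveAB[OF _ _ det, of "1" "1" "d 6" "d 9"] of by simp
  have "(\<omega>) * A1 * d 7 + (\<omega>^2) * A2 * d 10 = 0" using H[rule_format, of "[0,1,2,1]"] by (simp add: evsimps eval_nat_numeral algebra_simps)
  moreover have "(\<omega>) * B1 * d 7 + (\<omega>^2) * B2 * d 10 = 0" using H[rule_format, of "[2,1,0,1]"] by (simp add: evsimps eval_nat_numeral algebra_simps)
  ultimately have d7: "d 7 = 0 \<and> d 10 = 0" using solveAB[OF _ _ det, of "\<omega>" "\<omega>^2" "d 7" "d 10"] of by simp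
  have "(\<omega>^2) * A1 * d 8 + (\<omega>) * A2 * d 11 = 0" using H[rule_format, of "[1,2,0,2]"] by (simp add: evsimps eval_nat_numeral algebra_simps)
  moreover have "(\<omega>^2) * B1 * d 8 + (\<omega>) * B2 * d 11 = 0" using H[rule_format, of "[0,2,1,2]"] by (simp add: evsimps eval_nat_numeral algebra_simps)
  ultimately have d8: "d 8 = 0 \<and> d 11 = 0" using solveAB[OF _ _ det, of "\<omega>^2" "\<omega>" "d 8" "d 11"] of by simp
  have "\<forall>j\<in>{..<12}. d j = 0" using d0 d1 d2 d6 d7 d8 by (simp add: lessThan_nat_numeral)
  thus ?thesis by (simp add: L12_def)
qed

definition L9 :: "ncpoly \<Rightarrow> ncpoly \<Rightarrow> ncpoly list" where
  "L9 g1 g2 = [sh [0] g1 [], sh [1] g1 [], sh [2] g1 [], sh [] g1 [0], sh [] g1 [1], sh [] g1 [2],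
               sh [] g2 [0], sh [] g2 [1], sh [] g2 [2]]"

lemma pq0: "(A::complex) * p = 0 \<Longrightarrow> B * p = 0 \<Longrightarrow> (A, B) \<noteq> (0, 0) \<Longrightarrow> p = 0"
  by auto

lemma omega4a: "(w::complex)^2 * w^2 = w^3 * w" by algebra
lemma omega4: "(w::complex) ^ 3 = 1 \<Longrightarrow> w^2 * w^2 = w" using omega4a[of w] by simp
lemma det_a3: "(w::complex) ^ 3 = 1 \<Longrightarrow> w^2 \<noteq> w \<Longrightarrow> w * w - w^2 * w^2 \<noteq> 0"
proof -
  assume h: "w^3 = 1" "w^2 \<noteq> w"
  have "w * w - w^2 * w^2 = w^2 - w" using omega4[OF h(1)] by (metis power2_eq_square)
  thus ?thesis using h by simp
qed
lemma det_a4: "(w::complex) ^ 3 = 1 \<Longrightarrow> w^2 \<noteq> w \<Longrightarrow> w^2 * w^2 - w * w \<noteq> 0"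
proof -
  assume h: "w^3 = 1" "w^2 \<noteq> w"
  have "w^2 * w^2 - w * w = w - w^2" using omega4[OF h(1)] by (metis power2_eq_square)
  thus ?thesis using h by simp
qed

lemma key9:
  fixes \<omega> A1 B1 A2 B2 :: complex
  assumes w: "\<omega> ^ 3 = 1" "\<omega> \<noteq> 1" and n1: "(A1, B1) \<noteq> (0, 0)" and n2: "(A2, B2) \<noteq> (0, 0)"
  and H: "\<forall>x. x \<notin> NN 4 \<longrightarrow> (\<Sum>j<length (L9 (gen1 \<omega> A1 B1) (gen2 \<omega> A2 B2)). d j * (L9 (gen1 \<omega> A1 B1) (gen2 \<omega> A2 B2) ! j) x) = 0"
  shows "\<forall>j<length (L9 (gen1 \<omega> A1 B1) (gen2 \<omega> A2 B2)). d j = 0"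
proof -
  note of = omega_facts[OF w]
  note evsimps = evsimps L9_def
  have w4: "\<omega>^2 * \<omega>^2 = \<omega>" by (rule omega4[OF w(1)])
  have det1: "1 * \<omega>^2 - 1 * \<omega> \<noteq> 0" using of by simp
  have det2: "\<omega> * \<omega> - \<omega>^2 * \<omega>^2 \<noteq> 0" using det_a3 w of by blast
  have det3: "\<omega> * 1 - \<omega>^2 * 1 \<noteq> 0" using of by simp
  have det4: "\<omega>^2 * 1 - \<omega> * 1 \<noteq> 0" using of by simp
  have det5: "\<omega>^2 * \<omega>^2 - \<omega> * \<omega> \<noteq> 0" using det_a4 w of by blast
  have e0a: "1 * (A1 * d 0) = 0" using H[rule_format, of "[0,2,0,1]"] by (simp add: evsimps eval_nat_numeral algebra_simps)
  have e0b: "1 * (B1 * d 0) = 0" using H[rule_format, of "[0,1,0,2]"] by (simp add: evsimps eval_nat_numeral algebra_simps)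
  have d0: "d 0 = 0" using e0a e0b of n1 by (intro pq0[of A1 "d 0" B1]) simp_all
  have e1a: "\<omega> * (A1 * d 1) = 0" using H[rule_format, of "[1,0,1,2]"] by (simp add: evsimps eval_nat_numeral algebra_simps)
  have e1b: "\<omega> * (B1 * d 1) = 0" using H[rule_format, of "[1,2,1,0]"] by (simp add: evsimps eval_nat_numeral algebra_simps)
  have d1: "d 1 = 0" using e1a e1b of n1 by (intro pq0[of A1 "d 1" B1]) simp_all
  have e2a: "\<omega>^2 * (A1 * d 2) = 0" using H[rule_format, of "[2,1,2,0]"] by (simp add: evsimps eval_nat_numeral algebra_simps)
  have e2b: "\<omega>^2 * (B1 * d 2) = 0" using H[rule_format, of "[2,0,2,1]"] by (simp add: evsimps eval_nat_numeral algebra_simps)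
  have d2: "d 2 = 0" using e2a e2b of n1 by (intro pq0[of A1 "d 2" B1]) simp_all
  have r0_0: "(1) * (A1 * d 3) + (1) * (A2 * d 6) = 0" using H[rule_format, of "[2,0,1,0]"] d0 by (simp add: evsimps eval_nat_numeral algebra_simps)
  have r0_1: "(\<omega>) * (A1 * d 3) + (\<omega>^2) * (A2 * d 6) = 0" using H[rule_format, of "[0,1,2,0]"] d0 by (simp add: evsimps eval_nat_numeral algebra_simps)
  have r0_2: "(1) * (B1 * d 3) + (1) * (B2 * d 6) = 0" using H[rule_format, of "[1,0,2,0]"] d0 by (simp add: evsimps eval_nat_numeral algebra_simps)
  have r0_3: "(\<omega>^2) * (B1 * d 3) + (\<omega>) * (B2 * d 6) = 0" using H[rule_format, of "[0,2,1,0]"] d0 by (simp add: evsimps eval_nat_numeral algebra_simps)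
  have xA: "A1 * d 3 = 0 \<and> A2 * d 6 = 0" using lin2[OF r0_0 r0_1] det1 by simp
  have xB: "B1 * d 3 = 0 \<and> B2 * d 6 = 0" using lin2[OF r0_2 r0_3] det4 by simp
  have d3: "d 3 = 0" using xA xB n1 by (intro pq0[of A1 "d 3" B1]) simp_all
  have d6: "d 6 = 0" using xA xB n2 by (intro pq0[of A2 "d 6" B2]) simp_all
  have r1_0: "(\<omega>) * (A1 * d 4) + (\<omega>^2) * (A2 * d 7) = 0" using H[rule_format, of "[0,1,2,1]"] d1 by (simp add: evsimps eval_nat_numeral algebra_simps)
  have r1_1: "(\<omega>^2) * (A1 * d 4) + (\<omega>) * (A2 * d 7) = 0" using H[rule_format, of "[1,2,0,1]"] d1 by (simp add: evsimps eval_nat_numeral algebra_simps)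
  have r1_2: "(\<omega>) * (B1 * d 4) + (\<omega>^2) * (B2 * d 7) = 0" using H[rule_format, of "[2,1,0,1]"] d1 by (simp add: evsimps eval_nat_numeral algebra_simps)
  have r1_3: "(1) * (B1 * d 4) + (1) * (B2 * d 7) = 0" using H[rule_format, of "[1,0,2,1]"] d1 by (simp add: evsimps eval_nat_numeral algebra_simps)
  have xA: "A1 * d 4 = 0 \<and> A2 * d 7 = 0" using lin2[OF r1_0 r1_1] det2 by simp
  have xB: "B1 * d 4 = 0 \<and> B2 * d 7 = 0" using lin2[OF r1_2 r1_3] det3 by simp
  have d4: "d 4 = 0" using xA xB n1 by (intro pq0[of A1 "d 4" B1]) simp_all
  have d7: "d 7 = 0" using xA xB n2 by (intro pq0[of A2 "d 7" B2]) simp_all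
  have r2_0: "(\<omega>^2) * (A1 * d 5) + (\<omega>) * (A2 * d 8) = 0" using H[rule_format, of "[1,2,0,2]"] d2 by (simp add: evsimps eval_nat_numeral algebra_simps)
  have r2_1: "(1) * (A1 * d 5) + (1) * (A2 * d 8) = 0" using H[rule_format, of "[2,0,1,2]"] d2 by (simp add: evsimps eval_nat_numeral algebra_simps)
  have r2_2: "(\<omega>^2) * (B1 * d 5) + (\<omega>) * (B2 * d 8) = 0" using H[rule_format, of "[0,2,1,2]"] d2 by (simp add: evsimps eval_nat_numeral algebra_simps)
  have r2_3: "(\<omega>) * (B1 * d 5) + (\<omega>^2) * (B2 * d 8) = 0" using H[rule_format, of "[2,1,0,2]"] d2 by (simp add: evsimps eval_nat_numeral algebra_simps)
  have xA: "A1 * d 5 = 0 \<and> A2 * d 8 = 0" using lin2[OF r2_0 r2_1] det4 by simp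
  have xB: "B1 * d 5 = 0 \<and> B2 * d 8 = 0" using lin2[OF r2_2 r2_3] det5 by simp
  have d5: "d 5 = 0" using xA xB n1 by (intro pq0[of A1 "d 5" B1]) simp_all
  have d8: "d 8 = 0" using xA xB n2 by (intro pq0[of A2 "d 8" B2]) simp_all
  have "\<forall>j\<in>{..<9}. d j = 0" using d0 d1 d2 d3 d4 d5 d6 d7 d8 by (simp add: lessThan_nat_numeral)
  thus ?thesis by (simp add: L9_def)
qed




lemma W4_list: "set (filter (\<lambda>w. \<not> hasrep w) (wl 4)) = set [[0,1,0,1],[0,1,0,2],[0,1,2,0],[0,1,2,1],[0,2,0,1],[0,2,0,2],[0,2,1,0],[0,2,1,2],[1,0,1,0],[1,0,1,2],[1,0,2,0],[1,0,2,1],[1,2,0,1],[1,2,0,2],[1,2,1,0],[1,2,1,2],[2,0,1,0],[2,0,1,2],[2,0,2,0],[2,0,2,1],[2,1,0,1],[2,1,0,2],[2,1,2,0],[2,1,2,1]]"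
  by (simp add: numeral_eq_Suc)

lemma W4_mem: "x \<in> words 4 \<Longrightarrow> x \<notin> NN 4 \<Longrightarrow> x \<in> set [[0,1,0,1],[0,1,0,2],[0,1,2,0],[0,1,2,1],[0,2,0,1],[0,2,0,2],[0,2,1,0],[0,2,1,2],[1,0,1,0],[1,0,1,2],[1,0,2,0],[1,0,2,1],[1,2,0,1],[1,2,0,2],[1,2,1,0],[1,2,1,2],[2,0,1,0],[2,0,1,2],[2,0,2,0],[2,0,2,1],[2,1,0,1],[2,1,0,2],[2,1,2,0],[2,1,2,1]]"
  unfolding W4_list[symmetric] by (auto simp: NN_def set_wl)

lemma hom_out: "f \<in> hom k \<Longrightarrow> x \<notin> words k \<Longrightarrow> f x = 0"
  by (auto simp: hom_def FA_def words_def)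

lemma shL_hom: "a \<in> {0,1,2} \<Longrightarrow> g \<in> hom 3 \<Longrightarrow> sh [a] g [] \<in> hom 4"
  using sh_hom[of g 3 "[a]" "[]"] by auto

lemma shR_hom: "a \<in> {0,1,2} \<Longrightarrow> g \<in> hom 3 \<Longrightarrow> sh [] g [a] \<in> hom 4"
  using sh_hom[of g 3 "[]" "[a]"] by auto

lemma rel_zero0:
  fixes \<omega> c A1 B1 :: complex
  assumes w: "\<omega>^3 = 1"
  shows "\<forall>x. x \<notin> NN 4 \<longrightarrow> (sh [0] (gen2 \<omega> (c*A1) (c*B1)) [] - ncsc c (sh [0] (gen1 \<omega> A1 B1) [] + sh [] (gen1 \<omega> A1 B1) [0]) + sh [] (gen2 \<omega> (c*A1) (c*B1)) [0]) x = 0"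
proof (intro allI impI)
  fix x assume x: "x \<notin> NN 4"
  show "(sh [0] (gen2 \<omega> (c*A1) (c*B1)) [] - ncsc c (sh [0] (gen1 \<omega> A1 B1) [] + sh [] (gen1 \<omega> A1 B1) [0]) + sh [] (gen2 \<omega> (c*A1) (c*B1)) [0]) x = 0" (is "(?E) x = 0")
  proof (cases "x \<in> words 4")
    case False
    have a: "(0::nat) \<in> {0,1,2}" by simp
    show ?thesis using hom_out[OF shL_hom[OF a gen1_hom] False] hom_out[OF shL_hom[OF a gen2_hom] False]
       hom_out[OF shR_hom[OF a gen1_hom] False] hom_out[OF shR_hom[OF a gen2_hom] False] by simp
  next
    case True
    have w4: "\<omega>^2 * \<omega>^2 = \<omega>" by (rule omega4[OF w])
    have "\<forall>y\<in>set [[0,1,0,1],[0,1,0,2],[0,1,2,0],[0,1,2,1],[0,2,0,1],[0,2,0,2],[0,2,1,0],[0,2,1,2],[1,0,1,0],[1,0,1,2],[1,0,2,0],[1,0,2,1],[1,2,0,1],[1,2,0,2],[1,2,1,0],[1,2,1,2],[2,0,1,0],[2,0,1,2],[2,0,2,0],[2,0,2,1],[2,1,0,1],[2,1,0,2],[2,1,2,0],[2,1,2,1]]. (?E) y = 0"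
      apply (simp add: evsimps)
      apply (intro conjI)
      apply (use w in algebra | simp add: power2_eq_square w4 | use w w4 in \<open>simp add: power2_eq_square\<close>)+
      done
    thus ?thesis using W4_mem[OF True x] by blast
  qed
qed


lemma rel_zero1:
  fixes \<omega> c A1 B1 :: complex
  assumes w: "\<omega>^3 = 1"
  shows "\<forall>x. x \<notin> NN 4 \<longrightarrow> (sh [1] (gen2 \<omega> (c*A1) (c*B1)) [] - ncsc (\<omega>*c) (sh [1] (gen1 \<omega> A1 B1) [] + sh [] (gen1 \<omega> A1 B1) [1]) + sh [] (gen2 \<omega> (c*A1) (c*B1)) [1]) x = 0"
proof (intro allI impI)
  fix x assume x: "x \<notin> NN 4"
  show "(sh [1] (gen2 \<omega> (c*A1) (c*B1)) [] - ncsc (\<omega>*c) (sh [1] (gen1 \<omega> A1 B1) [] + sh [] (gen1 \<omega> A1 B1) [1]) + sh [] (gen2 \<omega> (c*A1) (c*B1)) [1]) x = 0" (is "(?E) x = 0")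
  proof (cases "x \<in> words 4")
    case False
    have a: "(1::nat) \<in> {0,1,2}" by simp
    show ?thesis using hom_out[OF shL_hom[OF a gen1_hom] False] hom_out[OF shL_hom[OF a gen2_hom] False]
       hom_out[OF shR_hom[OF a gen1_hom] False] hom_out[OF shR_hom[OF a gen2_hom] False] by simp
  next
    case True
    have w4: "\<omega>^2 * \<omega>^2 = \<omega>" by (rule omega4[OF w])
    have "\<forall>y\<in>set [[0,1,0,1],[0,1,0,2],[0,1,2,0],[0,1,2,1],[0,2,0,1],[0,2,0,2],[0,2,1,0],[0,2,1,2],[1,0,1,0],[1,0,1,2],[1,0,2,0],[1,0,2,1],[1,2,0,1],[1,2,0,2],[1,2,1,0],[1,2,1,2],[2,0,1,0],[2,0,1,2],[2,0,2,0],[2,0,2,1],[2,1,0,1],[2,1,0,2],[2,1,2,0],[2,1,2,1]]. (?E) y = 0"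
      apply (simp add: evsimps)
      apply (intro conjI)
      apply (use w in algebra | simp add: power2_eq_square w4 | use w w4 in \<open>simp add: power2_eq_square\<close>)+
      done
    thus ?thesis using W4_mem[OF True x] by blast
  qed
qed


lemma rel_zero2:
  fixes \<omega> c A1 B1 :: complex
  assumes w: "\<omega>^3 = 1"
  shows "\<forall>x. x \<notin> NN 4 \<longrightarrow> (sh [2] (gen2 \<omega> (c*A1) (c*B1)) [] - ncsc (\<omega>^2*c) (sh [2] (gen1 \<omega> A1 B1) [] + sh [] (gen1 \<omega> A1 B1) [2]) + sh [] (gen2 \<omega> (c*A1) (c*B1)) [2]) x = 0"
proof (intro allI impI)
  fix x assume x: "x \<notin> NN 4"
  show "(sh [2] (gen2 \<omega> (c*A1) (c*B1)) [] - ncsc (\<omega>^2*c) (sh [2] (gen1 \<omega> A1 B1) [] + sh [] (gen1 \<omega> A1 B1) [2]) + sh [] (gen2 \<omega> (c*A1) (c*B1)) [2]) x = 0" (is "(?E) x = 0")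
  proof (cases "x \<in> words 4")
    case False
    have a: "(2::nat) \<in> {0,1,2}" by simp
    show ?thesis using hom_out[OF shL_hom[OF a gen1_hom] False] hom_out[OF shL_hom[OF a gen2_hom] False]
       hom_out[OF shR_hom[OF a gen1_hom] False] hom_out[OF shR_hom[OF a gen2_hom] False] by simp
  next
    case True
    have w4: "\<omega>^2 * \<omega>^2 = \<omega>" by (rule omega4[OF w])
    have "\<forall>y\<in>set [[0,1,0,1],[0,1,0,2],[0,1,2,0],[0,1,2,1],[0,2,0,1],[0,2,0,2],[0,2,1,0],[0,2,1,2],[1,0,1,0],[1,0,1,2],[1,0,2,0],[1,0,2,1],[1,2,0,1],[1,2,0,2],[1,2,1,0],[1,2,1,2],[2,0,1,0],[2,0,1,2],[2,0,2,0],[2,0,2,1],[2,1,0,1],[2,1,0,2],[2,1,2,0],[2,1,2,1]]. (?E) y = 0"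
      apply (simp add: evsimps)
      apply (intro conjI)
      apply (use w in algebra | simp add: power2_eq_square w4 | use w w4 in \<open>simp add: power2_eq_square\<close>)+
      done
    thus ?thesis using W4_mem[OF True x] by blast
  qed
qed



lemma key3:
  fixes \<omega> A1 B1 A2 B2 :: complex
  assumes w: "\<omega> ^ 3 = 1" "\<omega> \<noteq> 1" and n1: "(A1, B1) \<noteq> (0, 0)" and n2: "(A2, B2) \<noteq> (0, 0)"
  and H: "\<forall>x. x \<notin> NN 3 \<longrightarrow> (\<Sum>j<length [gen1 \<omega> A1 B1, gen2 \<omega> A2 B2]. d j * ([gen1 \<omega> A1 B1, gen2 \<omega> A2 B2] ! j) x) = 0"
  shows "\<forall>j<length [gen1 \<omega> A1 B1, gen2 \<omega> A2 B2]. d j = 0"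
proof -
  note of = omega_facts[OF w]
  have r0: "1 * (A1 * d 0) + 1 * (A2 * d 1) = 0" using H[rule_format, of "[2,0,1]"] by (simp add: evsimps eval_nat_numeral algebra_simps)
  have r1: "\<omega> * (A1 * d 0) + \<omega>^2 * (A2 * d 1) = 0" using H[rule_format, of "[0,1,2]"] by (simp add: evsimps eval_nat_numeral algebra_simps)
  have r2: "1 * (B1 * d 0) + 1 * (B2 * d 1) = 0" using H[rule_format, of "[1,0,2]"] by (simp add: evsimps eval_nat_numeral algebra_simps)
  have r3: "\<omega> * (B1 * d 0) + \<omega>^2 * (B2 * d 1) = 0" using H[rule_format, of "[2,1,0]"] by (simp add: evsimps eval_nat_numeral algebra_simps)
  have dt: "1 * \<omega>^2 - 1 * \<omega> \<noteq> 0" using of by simp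
  have xA: "A1 * d 0 = 0 \<and> A2 * d 1 = 0" using lin2[OF r0 r1] dt by simp
  have xB: "B1 * d 0 = 0 \<and> B2 * d 1 = 0" using lin2[OF r2 r3] dt by simp
  have "d 0 = 0" using xA xB n1 by (intro pq0[of A1 "d 0" B1]) simp_all
  moreover have "d 1 = 0" using xA xB n2 by (intro pq0[of A2 "d 1" B2]) simp_all
  ultimately show ?thesis by (simp add: less_Suc_eq)
qed

lemma G_hom: "g \<in> Sp_rels \<omega> A1 B1 A2 B2 \<Longrightarrow> \<exists>d. g \<in> hom d"
proof -
  have m: "mon [a,a] \<in> hom 2" if "a \<in> {0,1,2}" for a :: nat using that by (intro mon_hom) (auto simp: words_def)
  assume "g \<in> Sp_rels \<omega> A1 B1 A2 B2"
  hence "g = mon [0,0] \<or> g = mon [1,1] \<or> g = mon [2,2] \<or> g = gen1 \<omega> A1 B1 \<or> g = gen2 \<omega> A2 B2"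
    by (simp add: Sp_rels_def)
  thus ?thesis using m[of 0] m[of 1] m[of 2] gen1_hom[of \<omega> A1 B1] gen2_hom[of \<omega> A2 B2] by auto
qed

lemma quot_eq:
  "quot_dim (Sp_rels \<omega> A1 B1 A2 B2) k = 3 ^ k - V.dim (V.span (mon ` NN k \<union> RR (gen1 \<omega> A1 B1) (gen2 \<omega> A2 B2) k))"
proof -
  have "ideal_gen (Sp_rels \<omega> A1 B1 A2 B2) \<inter> hom k = V.span (EE (Sp_rels \<omega> A1 B1 A2 B2) k)"
    by (rule ideal_hom[OF G_hom])
  also have "\<dots> = V.span (mon ` NN k \<union> RR (gen1 \<omega> A1 B1) (gen2 \<omega> A2 B2) k)"
    unfolding Sp_rels_def by (rule EE_char[OF gen1_hom gen2_hom])
  finally show ?thesis unfolding quot_dim_def dim_hom by (simp add: ncdim_eq)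
qed

lemma dim_small: "k < 3 \<Longrightarrow> V.dim (V.span (mon ` NN k \<union> RR g1 g2 k)) = card (NN k)"
  using indep_block[of "NN k" "[]"] by (simp add: RR_small)

lemma dim_3:
  fixes \<omega> A1 B1 A2 B2 :: complex
  assumes w: "\<omega> ^ 3 = 1" "\<omega> \<noteq> 1" and n1: "(A1, B1) \<noteq> (0, 0)" and n2: "(A2, B2) \<noteq> (0, 0)"
  shows "V.dim (V.span (mon ` NN 3 \<union> RR (gen1 \<omega> A1 B1) (gen2 \<omega> A2 B2) 3)) = 17"
proof -
  have "RR (gen1 \<omega> A1 B1) (gen2 \<omega> A2 B2) 3 = set [gen1 \<omega> A1 B1, gen2 \<omega> A2 B2]" by (simp add: RR_3)
  moreover have "V.dim (V.span (mon ` NN 3 \<union> set [gen1 \<omega> A1 B1, gen2 \<omega> A2 B2])) = card (NN 3) + 2"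
    using indep_block[of "NN 3" "[gen1 \<omega> A1 B1, gen2 \<omega> A2 B2]"] key3[OF w n1 n2] by simp
  ultimately show ?thesis by (simp add: card_NN_vals)
qed

lemma dim_4_ne:
  fixes \<omega> A1 B1 A2 B2 :: complex
  assumes w: "\<omega> ^ 3 = 1" "\<omega> \<noteq> 1" and det: "A1 * B2 - A2 * B1 \<noteq> 0"
  shows "V.dim (V.span (mon ` NN 4 \<union> RR (gen1 \<omega> A1 B1) (gen2 \<omega> A2 B2) 4)) = 69"
proof -
  have "V.dim (V.span (mon ` NN 4 \<union> set (L12 (gen1 \<omega> A1 B1) (gen2 \<omega> A2 B2)))) = card (NN 4) + 12"
    using indep_block[of "NN 4" "L12 (gen1 \<omega> A1 B1) (gen2 \<omega> A2 B2)"] key12[OF w det]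
    by (simp add: L12_def)
  thus ?thesis by (simp add: RR_4 card_NN_vals)
qed

lemma span_rel:
  fixes s t n X :: ncpoly and S :: "ncpoly set"
  assumes "n = s - ncsc l X + t" "n \<in> V.span S" "X \<in> V.span S" "t \<in> V.span S"
  shows "s \<in> V.span S"
proof -
  have "s = n + ncsc l X - t" using assms(1) by (simp add: algebra_simps)
  thus ?thesis using assms(2-4) by (metis V.span_add V.span_diff V.span_scale)
qed

lemma dim_4_eq:
  fixes \<omega> c A1 B1 :: complex
  assumes w: "\<omega> ^ 3 = 1" "\<omega> \<noteq> 1" and n1: "(A1, B1) \<noteq> (0, 0)" and n2: "(c * A1, c * B1) \<noteq> (0, 0)"
  shows "V.dim (V.span (mon ` NN 4 \<union> RR (gen1 \<omega> A1 B1) (gen2 \<omega> (c*A1) (c*B1)) 4)) = 66"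
proof -
  let ?g1 = "gen1 \<omega> A1 B1" and ?g2 = "gen2 \<omega> (c*A1) (c*B1)"
  let ?S = "mon ` NN 4 \<union> set (L9 ?g1 ?g2)"
  have mon_in: "V.span (mon ` NN 4) \<subseteq> V.span ?S" by (rule V.span_mono) auto
  have base: "x \<in> V.span ?S" if "x \<in> set (L9 ?g1 ?g2)" for x using that by (auto intro: V.span_base)
  have nz: "f \<in> V.span ?S" if "\<forall>x. x \<notin> NN 4 \<longrightarrow> f x = 0" for f
    using supp_span[of "NN 4" f] that mon_in by auto
  have L0: "sh [0] ?g2 [] \<in> V.span ?S"
    by (rule span_rel[OF refl nz[OF rel_zero0[OF w(1)]]], rule V.span_add, (rule V.span_base, simp add: L9_def)+)
  have L1: "sh [1] ?g2 [] \<in> V.span ?S"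
    by (rule span_rel[OF refl nz[OF rel_zero1[OF w(1)]]], rule V.span_add, (rule V.span_base, simp add: L9_def)+)
  have L2: "sh [2] ?g2 [] \<in> V.span ?S"
    by (rule span_rel[OF refl nz[OF rel_zero2[OF w(1)]]], rule V.span_add, (rule V.span_base, simp add: L9_def)+)
  have eq: "V.span (mon ` NN 4 \<union> set (L12 ?g1 ?g2)) = V.span ?S"
  proof (subst V.span_eq, intro conjI)
    show "mon ` NN 4 \<union> set (L12 ?g1 ?g2) \<subseteq> V.span ?S"
      using L0 L1 L2 base by (auto simp: L12_def L9_def intro: V.span_base)
    show "?S \<subseteq> V.span (mon ` NN 4 \<union> set (L12 ?g1 ?g2))"
      by (auto simp: L12_def L9_def intro: V.span_base)
  qed
  have "V.dim (V.span ?S) = card (NN 4) + 9"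
    using indep_block[of "NN 4" "L9 ?g1 ?g2"] key9[OF w n1 n2] by (simp add: L9_def)
  thus ?thesis using eq by (simp add: RR_4 card_NN_vals)
qed


lemma det0_prop:
  fixes A1 B1 A2 B2 :: complex
  assumes "(A1, B1) \<noteq> (0, 0)" "A1 * B2 - A2 * B1 = 0"
  obtains c where "A2 = c * A1" "B2 = c * B1"
proof (cases "A1 = 0")
  case True
  hence "B1 \<noteq> 0" using assms(1) by simp
  moreover have "A2 * B1 = 0" using assms(2) True by simp
  ultimately have "A2 = 0" by simp
  show ?thesis using that[of "B2 / B1"] True \<open>B1 \<noteq> 0\<close> \<open>A2 = 0\<close> by simp
next
  case False
  have "B2 = A2 / A1 * B1" using assms(2) False by (simp add: field_simps)
  thus ?thesis using that[of "A2 / A1"] False by simp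
qed

theorem mainTheorem9:
  fixes \<omega> A1 B1 A2 B2 :: complex
  assumes "\<omega> ^ 3 = 1" and "\<omega> \<noteq> 1"
    and "(A1, B1) \<noteq> (0, 0)" and "(A2, B2) \<noteq> (0, 0)"
  shows "(\<forall>k\<le>4. quot_dim (Sp_rels \<omega> A1 B1 A2 B2) k = (k + 2) choose 2)
         \<longleftrightarrow> A1 * B2 - A2 * B1 = 0"
proof -
  let ?q = "quot_dim (Sp_rels \<omega> A1 B1 A2 B2)"
  have small: "?q k = 3 ^ k - card (NN k)" if "k < 3" for k
    using quot_eq[of \<omega> A1 B1 A2 B2 k] dim_small[OF that] by simp
  have q0: "?q 0 = (0 + 2) choose 2" using small[of 0] card_NN_vals(1) by (simp add: numeral_eq_Suc)
  have q1: "?q 1 = (1 + 2) choose 2" using small[of 1] card_NN_vals(2) by (simp add: numeral_eq_Suc)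
  have q2: "?q 2 = (2 + 2) choose 2" using small[of 2] card_NN_vals(3) by (simp add: numeral_eq_Suc)
  have q3: "?q 3 = (3 + 2) choose 2"
    using quot_eq[of \<omega> A1 B1 A2 B2 3] dim_3[OF assms] by (simp add: numeral_eq_Suc)
  have c4: "(4 + 2 :: nat) choose 2 = 15" by (simp add: numeral_eq_Suc)
  show ?thesis
  proof
    assume all: "\<forall>k\<le>4. ?q k = (k + 2) choose 2"
    show "A1 * B2 - A2 * B1 = 0"
    proof (rule ccontr)
      assume det: "A1 * B2 - A2 * B1 \<noteq> 0"
      have "?q 4 = 81 - 69" using quot_eq[of \<omega> A1 B1 A2 B2 4] dim_4_ne[OF assms(1,2) det] by simp
      moreover have "?q 4 = 15" using all c4 by simp
      ultimately show False by simp
    qed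
  next
    assume det: "A1 * B2 - A2 * B1 = 0"
    obtain c where c: "A2 = c * A1" "B2 = c * B1" using det0_prop[OF assms(3) det] by blast
    have n2: "(c * A1, c * B1) \<noteq> (0, 0)" using assms(4) c by simp
    have "?q 4 = 81 - 66"
      using quot_eq[of \<omega> A1 B1 A2 B2 4] dim_4_eq[OF assms(1,2,3) n2] c by simp
    hence q4: "?q 4 = (4 + 2) choose 2" using c4 by simp
    show "\<forall>k\<le>4. ?q k = (k + 2) choose 2"
    proof (intro allI impI)
      fix k :: nat assume "k \<le> 4"
      hence "k = 0 \<or> k = 1 \<or> k = 2 \<or> k = 3 \<or> k = 4" by auto
      thus "?q k = (k + 2) choose 2" using q0 q1 q2 q3 q4 by auto
    qed
  qed
qed


end
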